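(* Let $f:\mathbb{R}\to\mathbb{R}$ satisfy $f(0)=0$ and $|f(u)-f(v)|\leq C|u-v|(e^{\lambda u^2}+e^{\lambda v^2})$ for all $u,v\in\mathbb{R}$, for some constants $C,\lambda>0$. Let $v\in L^\infty(\mathbb{R}^N)$ and $w_1,w_2\in\exp L^2(\mathbb{R}^N)$ with $\|w_1\|_{\exp L^2},\|w_2\|_{\exp L^2}\leq K$ for some $K>0$. Let $2\leq q<\infty$ and assume $4\lambda qK^2\leq1$. Then there exists a constant $C_q>0$ depending on $q$ such that $$\|f(w_1+v)-f(w_2+v)\|_{L^q}\leq C_q\,e^{2\lambda\|v\|_{L^\infty}^2}\|w_1-w_2\|_{\exp L^2}.$$
   Context: The Orlicz space $\exp L^2(\mathbb{R}^N)$ is the set of $u\in L^1_{loc}(\mathbb{R}^N)$ such that $\int_{\mathbb{R}^N}(e^{|u(x)|^2/\alpha^2}-1)\,dx<\infty$ for some $\alpha>0$, with the Luxemburg norm $\|u\|_{\exp L^2}=\inf\{\alpha>0:\int_{\mathbb{R}^N}(e^{|u(x)|^2/\alpha^2}-1)\,dx\leq 1\}$. *)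

theory Defs
  imports "HOL-Analysis.Analysis" "HOL-Probability.Essential_Supremum"
begin

text \<open>Functions on R^N are modelled as functions on a Euclidean space 'a
 (dimension DIM('a) = N), with Lebesgue measure.\<close>

definition L1_loc :: "('a::euclidean_space \<Rightarrow> real) set" where
  "L1_loc = {u. u \<in> borel_measurable lebesgue \<and>
                 (\<forall>S. compact S \<longrightarrow> set_integrable lebesgue S u)}"

definition expL2 :: "('a::euclidean_space \<Rightarrow> real) set" where
  "expL2 = {u. u \<in> L1_loc \<and>
     (\<exists>\<alpha>>0. (\<integral>\<^sup>+ x. ennreal (exp ((u x)\<^sup>2 / \<alpha>\<^sup>2) - 1) \<partial>lebesgue) < \<infinity>)}"

definition expL2_norm :: "('a::euclidean_space \<Rightarrow> real) \<Rightarrow> real" where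
  "expL2_norm u = Inf {\<alpha>. \<alpha> > 0 \<and>
     (\<integral>\<^sup>+ x. ennreal (exp ((u x)\<^sup>2 / \<alpha>\<^sup>2) - 1) \<partial>lebesgue) \<le> 1}"

definition Linf :: "('a::euclidean_space \<Rightarrow> real) set" where
  "Linf = {v. v \<in> borel_measurable lebesgue \<and>
              esssup lebesgue (\<lambda>x. ereal \<bar>v x\<bar>) < \<infinity>}"

definition Linf_norm :: "('a::euclidean_space \<Rightarrow> real) \<Rightarrow> real" where
  "Linf_norm v = real_of_ereal (esssup lebesgue (\<lambda>x. ereal \<bar>v x\<bar>))"

text \<open>q-th power of the L^q norm, as an extended nonnegative real:
  Lq_norm_pow q g = ||g||_{L^q}^q (possibly infinite).\<close>
definition Lq_norm_pow :: "real \<Rightarrow> ('a::euclidean_space \<Rightarrow> real) \<Rightarrow> ennreal" where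
  "Lq_norm_pow q g = (\<integral>\<^sup>+ x. ennreal (\<bar>g x\<bar> powr q) \<partial>lebesgue)"

end

theory Submission
  imports Defs
begin

definition cst :: "real \<Rightarrow> real" where "cst r = 1 + 2 * r powr r"

lemma pow_le_exp:
  fixes r t :: real assumes r: "1 \<le> r" and t: "0 \<le> t"
  shows "t powr r \<le> cst r * (exp t - 1)"
proof (cases "t \<le> 1")
  case True
  have "t powr r \<le> t powr 1" using True t r by (intro powr_mono') auto
  also have "\<dots> \<le> t" using t by simp
  also have "t \<le> exp t - 1" using exp_ge_add_one_self[of t] by linarith
  also have "\<dots> \<le> cst r * (exp t - 1)"
  proof -
    have "0 \<le> exp t - 1" using exp_ge_add_one_self[of t] t by linarith
    moreover have "1 \<le> cst r" unfolding cst_def by simp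
    ultimately show ?thesis by (metis mult_le_cancel_right1 mult.commute order_refl mult_right_mono  mult_1)
  qed
  finally show ?thesis .
next
  case False
  have e1: "t / r \<le> exp (t / r)" using exp_ge_add_one_self[of "t/r"] by linarith
  have "t powr r = r powr r * (t / r) powr r" using r t by (simp add: powr_divide)
  also have "(t/r) powr r \<le> exp (t/r) powr r" using e1 r t by (intro powr_mono2) auto
  hence "r powr r * (t / r) powr r \<le> r powr r * exp (t/r) powr r" by (simp add: mult_left_mono)
  also have "exp (t/r) powr r = exp t" using r by (simp add: powr_def)
  also have "exp t \<le> 2 * (exp t - 1)"
  proof -
    have "exp 1 \<le> exp t" using False by simp
    moreover have "2 \<le> exp (1::real)" using exp_ge_add_one_self[of 1] by simp
    ultimately have "2 \<le> exp t" by linarith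
    thus ?thesis by simp
  qed
  hence "r powr r * exp t \<le> r powr r * (2 * (exp t - 1))" by (simp add: mult_left_mono)
  also have "\<dots> \<le> cst r * (exp t - 1)" unfolding cst_def
    using exp_ge_add_one_self[of t] t by (simp add: algebra_simps)
  finally show ?thesis .
qed

lemma superadd_powr:
  fixes a b p :: real assumes "0 \<le> a" "0 \<le> b" "1 \<le> p"
  shows "a powr p + b powr p \<le> (a + b) powr p"
proof -
  have "a powr p = a * a powr (p - 1)" using assms
    by (cases "a = 0") (auto simp: powr_diff powr_one)
  also have "\<dots> \<le> a * (a + b) powr (p - 1)" using assms by (intro mult_left_mono powr_mono2) auto
  finally have 1: "a powr p \<le> a * (a + b) powr (p - 1)" .
  have "b powr p = b * b powr (p - 1)" using assms
    by (cases "b = 0") (auto simp: powr_diff powr_one)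
  also have "\<dots> \<le> b * (a + b) powr (p - 1)" using assms by (intro mult_left_mono powr_mono2) auto
  finally have 2: "b powr p \<le> b * (a + b) powr (p - 1)" .
  have 3: "(a + b) * (a + b) powr (p - 1) = (a+b) powr p" using assms
    by (cases "a + b = 0") (auto simp: powr_diff)
  show ?thesis using 1 2 3 by (simp add: algebra_simps)
qed

lemma expm1_powr:
  fixes s p :: real assumes "0 \<le> s" "1 \<le> p"
  shows "(exp s - 1) powr p \<le> exp (p * s) - 1"
proof -
  have "0 \<le> exp s - 1" using exp_ge_add_one_self[of s] assms by linarith
  from superadd_powr[OF this _ assms(2), of 1]
  have "(exp s - 1) powr p + 1 \<le> exp s powr p" by simp
  also have "exp s powr p = exp (p * s)" by (simp add: powr_def mult.commute)
  finally show ?thesis by simp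
qed


definition II :: "('a::euclidean_space \<Rightarrow> real) \<Rightarrow> real \<Rightarrow> ennreal" where
  "II u a = (\<integral>\<^sup>+ x. ennreal (exp ((u x)\<^sup>2 / a\<^sup>2) - 1) \<partial>lebesgue)"

lemma II_mono:
  assumes "0 < a" "a \<le> b" shows "II u b \<le> II u a"
  unfolding II_def
proof (intro nn_integral_mono ennreal_leI)
  fix x
  have "(u x)\<^sup>2 / b\<^sup>2 \<le> (u x)\<^sup>2 / a\<^sup>2" using assms
    by (intro divide_left_mono power_mono) auto
  thus "exp ((u x)\<^sup>2 / b\<^sup>2) - 1 \<le> exp ((u x)\<^sup>2 / a\<^sup>2) - 1" by simp
qed

lemma norm_prop:
  assumes ne: "\<exists>a>0. II u a \<le> 1"
  shows "0 \<le> expL2_norm u" and "\<And>b. expL2_norm u < b \<Longrightarrow> II u b \<le> 1"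
proof -
  let ?S = "{a. a > 0 \<and> (\<integral>\<^sup>+ x. ennreal (exp ((u x)\<^sup>2 / a\<^sup>2) - 1) \<partial>lebesgue) \<le> 1}"
  have S: "?S \<noteq> {}" using ne unfolding II_def by auto
  have bdd: "bdd_below ?S" by (rule bdd_belowI[of _ 0]) auto
  show "0 \<le> expL2_norm u" unfolding expL2_norm_def
    using S by (intro cInf_greatest) auto
  fix b assume "expL2_norm u < b"
  then obtain a where a: "a \<in> ?S" "a < b" unfolding expL2_norm_def
    using cInf_less_iff[OF S bdd] by auto
  have "II u b \<le> II u a" using a by (intro II_mono) auto
  also have "\<dots> \<le> 1" using a unfolding II_def by auto
  finally show "II u b \<le> 1" .
qed

lemma exp_convex_aux:
  fixes th s :: real assumes "0 \<le> th" "th \<le> 1"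
  shows "exp (th * s) - 1 \<le> th * (exp s - 1)"
proof -
  have "exp ((1 - th) *\<^sub>R 0 + th *\<^sub>R s) \<le> (1 - th) * exp 0 + th * exp s"
    using convex_onD[OF exp_convex, of th 0 s] assms by (auto)
  thus ?thesis by (simp add: algebra_simps)
qed

lemma nonempty_of_expL2:
  assumes "u \<in> expL2"
  shows "u \<in> borel_measurable lebesgue" "\<exists>a>0. II u a \<le> 1"
proof -
  show meas: "u \<in> borel_measurable lebesgue" using assms unfolding expL2_def L1_loc_def by auto
  obtain a0 where a0: "a0 > 0" "II u a0 < \<infinity>" using assms unfolding expL2_def II_def by auto
  obtain r where r: "II u a0 = ennreal r" "0 \<le> r" using a0(2)
    by (cases "II u a0") auto
  define th where "th = 1 / (1 + r)"
  have th: "0 < th" "th \<le> 1" using r by (auto simp: th_def)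
  define a where "a = a0 / sqrt th"
  have a: "a > 0" using a0 th by (simp add: a_def)
  have "II u a \<le> (\<integral>\<^sup>+ x. ennreal th * ennreal (exp ((u x)\<^sup>2 / a0\<^sup>2) - 1) \<partial>lebesgue)"
    unfolding II_def
  proof (intro nn_integral_mono)
    fix x
    have "(u x)\<^sup>2 / a\<^sup>2 = th * ((u x)\<^sup>2 / a0\<^sup>2)" using th a0
      by (simp add: a_def power_divide)
    hence "exp ((u x)\<^sup>2 / a\<^sup>2) - 1 \<le> th * (exp ((u x)\<^sup>2 / a0\<^sup>2) - 1)"
      using exp_convex_aux[OF less_imp_le[OF th(1)] th(2), of "(u x)\<^sup>2 / a0\<^sup>2"] by simp
    thus "ennreal (exp ((u x)\<^sup>2 / a\<^sup>2) - 1) \<le> ennreal th * ennreal (exp ((u x)\<^sup>2 / a0\<^sup>2) - 1)"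
      using th by (simp add: ennreal_mult[symmetric] ennreal_leI)
  qed
  also have "\<dots> = ennreal th * II u a0" unfolding II_def
    using meas by (intro nn_integral_cmult, measurable)
  also have "\<dots> = ennreal (th * r)" using r th by (simp add: ennreal_mult)
  also have "\<dots> \<le> 1" using r th by (simp add: th_def)
  finally show "\<exists>a>0. II u a \<le> 1" using a by auto
qed


lemma nonempty_diff:
  assumes m1: "u1 \<in> borel_measurable lebesgue" and m2: "u2 \<in> borel_measurable lebesgue"
    and n1: "\<exists>a>0. II u1 a \<le> 1" and n2: "\<exists>a>0. II u2 a \<le> 1"
  shows "\<exists>a>0. II (\<lambda>x. u1 x - u2 x) a \<le> 1"
proof -
  obtain a1 a2 where a: "a1 > 0" "II u1 a1 \<le> 1" "a2 > 0" "II u2 a2 \<le> 1" using n1 n2 by auto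
  define b where "b = max a1 a2"
  have b: "b > 0" "a1 \<le> b" "a2 \<le> b" using a by (auto simp: b_def)
  have i1: "II u1 b \<le> 1" using II_mono[of a1 b u1] a b by auto
  have i2: "II u2 b \<le> 1" using II_mono[of a2 b u2] a b by auto
  have "II (\<lambda>x. u1 x - u2 x) (2 * b) \<le> (\<integral>\<^sup>+ x. ennreal (1/2) * ennreal (exp ((u1 x)\<^sup>2 / b\<^sup>2) - 1)
        + ennreal (1/2) * ennreal (exp ((u2 x)\<^sup>2 / b\<^sup>2) - 1) \<partial>lebesgue)"
    unfolding II_def
  proof (intro nn_integral_mono)
    fix x
    let ?s = "(u1 x)\<^sup>2 / b\<^sup>2" and ?t = "(u2 x)\<^sup>2 / b\<^sup>2"
    have "(u1 x - u2 x)\<^sup>2 \<le> 2 * ((u1 x)\<^sup>2 + (u2 x)\<^sup>2)"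
      using sum_squares_ge_zero[of "u1 x + u2 x" 0] by (simp add: power2_eq_square algebra_simps)
    hence "(u1 x - u2 x)\<^sup>2 / (2 * b)\<^sup>2 \<le> (1 - 1/2) * ?s + (1/2) * ?t" using b
      by (simp add: power_mult_distrib field_simps)
    hence "exp ((u1 x - u2 x)\<^sup>2 / (2 * b)\<^sup>2) \<le> exp ((1 - 1/2) * ?s + (1/2) * ?t)" by simp
    also have "\<dots> \<le> (1 - 1/2) * exp ?s + (1/2) * exp ?t"
      using convex_onD[OF exp_convex, of "1/2" ?s ?t] by simp
    finally have "exp ((u1 x - u2 x)\<^sup>2 / (2 * b)\<^sup>2) \<le> (1 - 1/2) * exp ?s + (1/2) * exp ?t" .
    hence "exp ((u1 x - u2 x)\<^sup>2 / (2 * b)\<^sup>2) - 1 \<le> (1/2) * (exp ?s - 1) + (1/2) * (exp ?t - 1)"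
      by (simp add: algebra_simps)
    moreover have "0 \<le> exp ?s - 1" "0 \<le> exp ?t - 1" by auto
    ultimately show "ennreal (exp ((u1 x - u2 x)\<^sup>2 / (2 * b)\<^sup>2) - 1)
      \<le> ennreal (1 / 2) * ennreal (exp ?s - 1) + ennreal (1 / 2) * ennreal (exp ?t - 1)"
    proof -
      assume le: "exp ((u1 x - u2 x)\<^sup>2 / (2 * b)\<^sup>2) - 1 \<le> (1/2) * (exp ?s - 1) + (1/2) * (exp ?t - 1)"
        and nn: "0 \<le> exp ?s - 1" "0 \<le> exp ?t - 1"
      have "ennreal (exp ((u1 x - u2 x)\<^sup>2 / (2 * b)\<^sup>2) - 1) \<le> ennreal ((1/2) * (exp ?s - 1) + (1/2) * (exp ?t - 1))"
        using le by (rule ennreal_leI)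
      also have "\<dots> = ennreal (1 / 2) * ennreal (exp ?s - 1) + ennreal (1 / 2) * ennreal (exp ?t - 1)"
        using nn by (metis ennreal_mult ennreal_plus mult_nonneg_nonneg zero_le_divide_1_iff zero_le_numeral zero_le_one)
      finally show ?thesis .
    qed
  qed
  also have "\<dots> = ennreal (1/2) * II u1 b + ennreal (1/2) * II u2 b" unfolding II_def
    using m1 m2 by (subst nn_integral_add, measurable, subst nn_integral_cmult, measurable,
        subst nn_integral_cmult, measurable)
  also have "\<dots> \<le> ennreal (1/2) * 1 + ennreal (1/2) * 1"
    using i1 i2 by (intro add_mono mult_left_mono) auto
  also have "\<dots> = 1" using ennreal_plus[of "1/2" "1/2"] by simp
  finally show ?thesis using b by (intro exI[of _ "2*b"]) auto
qed

lemma fatou_K: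
  assumes m: "u \<in> borel_measurable lebesgue" and K: "K > 0" and h: "\<And>a. a > K \<Longrightarrow> II u a \<le> 1"
  shows "II u K \<le> 1"
proof -
  define g where "g n x = ennreal (exp ((u x)\<^sup>2 / (K + 1 / Suc n)\<^sup>2) - 1)" for n x
  have lim: "(\<lambda>n. g n x) \<longlonglongrightarrow> ennreal (exp ((u x)\<^sup>2 / K\<^sup>2) - 1)" for x
  proof -
    have "(\<lambda>n. K + 1 / real (Suc n)) \<longlonglongrightarrow> K + 0"
      by (intro tendsto_add tendsto_const LIMSEQ_inverse_real_of_nat[unfolded inverse_eq_divide])
    hence "(\<lambda>n. exp ((u x)\<^sup>2 / (K + 1 / real (Suc n))\<^sup>2) - 1) \<longlonglongrightarrow> exp ((u x)\<^sup>2 / K\<^sup>2) - 1"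
      using K by (auto intro!: tendsto_intros)
    thus ?thesis unfolding g_def by (intro tendsto_ennrealI)
  qed
  have "II u K = (\<integral>\<^sup>+ x. liminf (\<lambda>n. g n x) \<partial>lebesgue)"
  proof -
    have "liminf (\<lambda>n. g n x) = ennreal (exp ((u x)\<^sup>2 / K\<^sup>2) - 1)" for x
      by (intro lim_imp_Liminf lim) simp
    thus ?thesis unfolding II_def by simp
  qed
  also have "\<dots> \<le> liminf (\<lambda>n. integral\<^sup>N lebesgue (g n))"
    by (rule nn_integral_liminf) (use m in \<open>unfold g_def, measurable\<close>)
  also have "\<dots> \<le> 1"
  proof (rule Liminf_le)
    show "\<forall>\<^sub>F n in sequentially. integral\<^sup>N lebesgue (g n) \<le> 1"
    proof (intro always_eventually allI)
      fix n
      have "K + 1 / Suc n > K" by simp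
      from h[OF this] show "integral\<^sup>N lebesgue (g n) \<le> 1" unfolding II_def g_def by simp
    qed
  qed simp
  finally show ?thesis .
qed


lemma sq_powr: "0 \<le> (x::real) \<Longrightarrow> (x\<^sup>2) powr r = x powr (2 * r)"
proof (cases "x = 0")
  case False
  assume "0 \<le> x"
  hence "x\<^sup>2 = x powr 2" using False by (simp add: powr_numeral)
  thus ?thesis by (simp add: powr_powr)
qed simp

lemma embed:
  assumes m: "u \<in> borel_measurable lebesgue" and a: "a > 0" and I: "II u a \<le> 1" and p: "2 \<le> p"
  shows "(\<integral>\<^sup>+ x. ennreal (\<bar>u x\<bar> powr p) \<partial>lebesgue) \<le> ennreal (cst (p/2) * a powr p)"
proof -
  have c0: "0 \<le> cst (p/2)" unfolding cst_def by simp
  have "(\<integral>\<^sup>+ x. ennreal (\<bar>u x\<bar> powr p) \<partial>lebesgue) \<le>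
        (\<integral>\<^sup>+ x. ennreal (cst (p/2) * a powr p) * ennreal (exp ((u x)\<^sup>2 / a\<^sup>2) - 1) \<partial>lebesgue)"
  proof (intro nn_integral_mono)
    fix x
    have e1: "\<bar>u x\<bar> powr p = (\<bar>u x\<bar> / a) powr p * a powr p"
      using powr_mult[of "\<bar>u x\<bar> / a" a p] a by simp
    have e2: "(\<bar>u x\<bar> / a) powr p = ((u x)\<^sup>2 / a\<^sup>2) powr (p/2)"
      using sq_powr[of "\<bar>u x\<bar> / a" "p/2"] a by (simp add: power_divide)
    have e3: "((u x)\<^sup>2 / a\<^sup>2) powr (p/2) \<le> cst (p/2) * (exp ((u x)\<^sup>2 / a\<^sup>2) - 1)"
      using p by (intro pow_le_exp) auto
    have "\<bar>u x\<bar> powr p \<le> cst (p/2) * (exp ((u x)\<^sup>2 / a\<^sup>2) - 1) * a powr p"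
      unfolding e1 e2 by (rule mult_right_mono[OF e3]) simp
    hence "\<bar>u x\<bar> powr p \<le> cst (p/2) * a powr p * (exp ((u x)\<^sup>2 / a\<^sup>2) - 1)"
      by (simp add: mult.commute mult.left_commute)
    moreover have "0 \<le> exp ((u x)\<^sup>2 / a\<^sup>2) - 1" by simp
    ultimately show "ennreal (\<bar>u x\<bar> powr p) \<le> ennreal (cst (p/2) * a powr p) * ennreal (exp ((u x)\<^sup>2 / a\<^sup>2) - 1)"
      using c0 by (simp add: ennreal_mult[symmetric] ennreal_leI)
  qed
  also have "\<dots> = ennreal (cst (p/2) * a powr p) * II u a" unfolding II_def
    using m by (intro nn_integral_cmult, measurable)
  also have "\<dots> \<le> ennreal (cst (p/2) * a powr p) * 1" using I by (intro mult_left_mono) auto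
  finally show ?thesis by simp
qed

lemma limit_right:
  fixes n B q :: real
  assumes n: "0 \<le> n" and q: "0 < q" and B: "0 \<le> B" and h: "\<And>a. n < a \<Longrightarrow> X \<le> ennreal (B * a powr q)"
  shows "X \<le> ennreal (B * n powr q)"
proof -
  have "X \<le> ennreal (B * (n+1) powr q)" using h[of "n+1"] by simp
  hence "X < top" using ennreal_less_top[of "B * (n+1) powr q"] by (rule order.strict_trans1)
  then obtain x where x: "X = ennreal x" "0 \<le> x" by (cases X) auto
  have ev: "\<forall>\<^sub>F a in at_right n. 0 \<le> a"
    using eventually_at_right_less[of n] by (rule eventually_mono) (use n in auto)
  have "((\<lambda>a. B * a powr q) \<longlongrightarrow> B * n powr q) (at_right n)"
    using q ev by (intro tendsto_intros tendsto_ident_at) auto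
  moreover have "\<forall>\<^sub>F a in at_right n. x \<le> B * a powr q"
    using eventually_at_right_less[of n]
  proof (rule eventually_mono)
    fix a assume "n < a"
    from h[OF this] x have "ennreal x \<le> ennreal (B * a powr q)" by simp
    moreover have "0 \<le> B * a powr q" using B by simp
    ultimately show "x \<le> B * a powr q" by (simp add: ennreal_le_iff)
  qed
  ultimately have "x \<le> B * n powr q" by (intro tendsto_lowerbound) auto
  thus ?thesis using x by (simp add: ennreal_leI)
qed


lemma amgm_t:
  fixes X Y t :: real assumes "0 < t"
  shows "X * Y \<le> (X * X / t + t * (Y * Y)) / 2"
proof -
  have "0 \<le> (X - t * Y) * (X - t * Y)" by simp
  hence "2 * t * (X * Y) \<le> X * X + t * t * (Y * Y)" by (simp add: algebra_simps)
  hence "t * (2 * (X * Y)) \<le> t * (X * X / t + t * (Y * Y))" using assms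
    by (simp add: algebra_simps)
  hence "2 * (X * Y) \<le> X * X / t + t * (Y * Y)" using assms by simp
  thus ?thesis by simp
qed

lemma pointwise:
  fixes A q t d e1 e2 y :: real
  assumes A: "0 \<le> A" and q: "1 \<le> q" and t: "0 < t" and d: "0 \<le> d" and e: "0 \<le> e1" "0 \<le> e2"
    and y: "0 \<le> y" "y \<le> A * d * (2 + e1 + e2)"
  shows "y powr q \<le> (3*A) powr q * 2 powr q * d powr q + (3*A) powr q / t * d powr (2*q)
           + (3*A) powr q * t / 2 * (e1 powr (2*q) + e2 powr (2*q))"
proof -
  define m where "m = max 2 (max e1 e2)"
  have m: "0 \<le> m" "2 + e1 + e2 \<le> 3 * m" by (auto simp: m_def)
  have "y \<le> (3 * A) * d * m"
  proof -
    have "A * d * (2 + e1 + e2) \<le> A * d * (3 * m)" using A d m by (intro mult_left_mono) auto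
    thus ?thesis using y by (simp add: algebra_simps)
  qed
  hence "y powr q \<le> ((3 * A) * d * m) powr q" using y q by (intro powr_mono2) auto
  also have "\<dots> = (3*A) powr q * d powr q * m powr q" using A d m by (simp add: powr_mult)
  also have "m powr q \<le> 2 powr q + e1 powr q + e2 powr q"
    unfolding m_def by (auto simp: max_def)
  hence "(3*A) powr q * d powr q * m powr q \<le> (3*A) powr q * d powr q * (2 powr q + e1 powr q + e2 powr q)"
    by (intro mult_left_mono) auto
  also have "\<dots> = (3*A) powr q * 2 powr q * d powr q + (3*A) powr q * (d powr q * e1 powr q)
       + (3*A) powr q * (d powr q * e2 powr q)" by (simp add: algebra_simps)
  also have "\<dots> \<le> (3*A) powr q * 2 powr q * d powr q
       + (3*A) powr q * ((d powr q * d powr q / t + t * (e1 powr q * e1 powr q)) / 2)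
       + (3*A) powr q * ((d powr q * d powr q / t + t * (e2 powr q * e2 powr q)) / 2)"
    using t by (intro add_mono mult_left_mono amgm_t order_refl) auto
  also have "\<dots> = (3*A) powr q * 2 powr q * d powr q + (3*A) powr q / t * d powr (2*q)
           + (3*A) powr q * t / 2 * (e1 powr (2*q) + e2 powr (2*q))"
  proof -
    have "\<And>z::real. z powr (2*q) = z powr q * z powr q" by (simp add: powr_add[symmetric])
    thus ?thesis by (simp add: algebra_simps add_divide_distrib)
  qed
  finally show ?thesis .
qed


lemma f_cont:
  fixes f :: "real \<Rightarrow> real"
  assumes f_growth: "\<And>u v. \<bar>f u - f v\<bar> \<le> C * \<bar>u - v\<bar> * (exp (lam * u\<^sup>2) + exp (lam * v\<^sup>2))"
  shows "continuous_on UNIV f"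
proof -
  have "isCont f u" for u
  proof -
    have "((\<lambda>v. f v - f u) \<longlongrightarrow> 0) (at u)"
    proof (rule Lim_null_comparison)
      show "\<forall>\<^sub>F v in at u. norm (f v - f u) \<le> C * \<bar>v - u\<bar> * (exp (lam * v\<^sup>2) + exp (lam * u\<^sup>2))"
        using f_growth by simp
      have "((\<lambda>v. C * \<bar>v - u\<bar> * (exp (lam * v\<^sup>2) + exp (lam * u\<^sup>2))) \<longlongrightarrow>
             C * \<bar>u - u\<bar> * (exp (lam * u\<^sup>2) + exp (lam * u\<^sup>2))) (at u)"
        by (intro tendsto_intros)
      thus "((\<lambda>v. C * \<bar>v - u\<bar> * (exp (lam * v\<^sup>2) + exp (lam * u\<^sup>2))) \<longlongrightarrow> 0) (at u)" by simp
    qed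
    hence "(f \<longlongrightarrow> f u) (at u)" by (simp add: LIM_zero_iff)
    thus ?thesis by (simp add: isCont_def)
  qed
  thus ?thesis by (simp add: continuous_at_imp_continuous_on)
qed

lemma Linf_AE:
  assumes "v \<in> Linf"
  shows "AE x in lebesgue. \<bar>v x\<bar> \<le> Linf_norm v"
proof -
  have fin: "esssup lebesgue (\<lambda>x. ereal \<bar>v x\<bar>) < \<infinity>" using assms unfolding Linf_def by auto
  show ?thesis using esssup_AE[of "\<lambda>x. ereal \<bar>v x\<bar>" lebesgue]
  proof (rule eventually_mono)
    fix x assume h: "ereal \<bar>v x\<bar> \<le> esssup lebesgue (\<lambda>x. ereal \<bar>v x\<bar>)"
    show "\<bar>v x\<bar> \<le> Linf_norm v" unfolding Linf_norm_def
      using h fin by (cases "esssup lebesgue (\<lambda>x. ereal \<bar>v x\<bar>)") auto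
  qed
qed


lemma exp_shift:
  fixes lam M vv a :: real
  assumes lam: "0 < lam" and vv: "\<bar>vv\<bar> \<le> M"
  shows "exp (lam * (a + vv)\<^sup>2) \<le> exp (2*lam*M\<^sup>2) * (1 + (exp (2*lam*a\<^sup>2) - 1))"
proof -
  have "vv\<^sup>2 \<le> M\<^sup>2" using vv by (metis abs_ge_zero power2_abs power_mono)
  moreover have "(a + vv)\<^sup>2 \<le> 2 * a\<^sup>2 + 2 * vv\<^sup>2"
    using sum_squares_ge_zero[of "a - vv" 0] by (simp add: power2_eq_square algebra_simps)
  ultimately have "(a + vv)\<^sup>2 \<le> 2 * M\<^sup>2 + 2 * a\<^sup>2" by linarith
  hence "lam * (a + vv)\<^sup>2 \<le> lam * (2 * M\<^sup>2 + 2 * a\<^sup>2)" using lam by (intro mult_left_mono) auto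
  hence "exp (lam * (a + vv)\<^sup>2) \<le> exp (2*lam*M\<^sup>2 + 2*lam*a\<^sup>2)" by (simp add: algebra_simps)
  thus ?thesis by (simp add: exp_add)
qed

lemma pt_bound:
  fixes f :: "real \<Rightarrow> real"
  assumes f_growth: "\<And>u v. \<bar>f u - f v\<bar> \<le> C * \<bar>u - v\<bar> * (exp (lam * u\<^sup>2) + exp (lam * v\<^sup>2))"
    and C: "0 < C" and lam: "0 < lam" and vv: "\<bar>vv\<bar> \<le> M"
  shows "\<bar>f (a + vv) - f (b + vv)\<bar> \<le> C * exp (2*lam*M\<^sup>2) * \<bar>a - b\<bar>
           * (2 + (exp (2*lam*a\<^sup>2) - 1) + (exp (2*lam*b\<^sup>2) - 1))"
proof -
  have "\<bar>f (a + vv) - f (b + vv)\<bar> \<le> C * \<bar>a - b\<bar> * (exp (lam * (a + vv)\<^sup>2) + exp (lam * (b + vv)\<^sup>2))"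
    using f_growth[of "a + vv" "b + vv"] by simp
  also have "\<dots> \<le> C * \<bar>a - b\<bar> * (exp (2*lam*M\<^sup>2) * (1 + (exp (2*lam*a\<^sup>2) - 1))
                  + exp (2*lam*M\<^sup>2) * (1 + (exp (2*lam*b\<^sup>2) - 1)))"
    using C by (intro mult_left_mono add_mono exp_shift[OF lam vv]) auto
  also have "\<dots> = C * exp (2*lam*M\<^sup>2) * \<bar>a - b\<bar> * (2 + (exp (2*lam*a\<^sup>2) - 1) + (exp (2*lam*b\<^sup>2) - 1))"
    by (simp add: algebra_simps)
  finally show ?thesis .
qed

lemma E_bound:
  assumes m: "u \<in> borel_measurable lebesgue" and K: "0 < K" and I: "II u K \<le> 1"
    and lam: "0 < lam" and q: "1 \<le> q" and hK: "4 * lam * q * K\<^sup>2 \<le> 1"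
  shows "(\<integral>\<^sup>+ x. ennreal ((exp (2*lam*(u x)\<^sup>2) - 1) powr (2*q)) \<partial>lebesgue) \<le> 1"
proof -
  have "(\<integral>\<^sup>+ x. ennreal ((exp (2*lam*(u x)\<^sup>2) - 1) powr (2*q)) \<partial>lebesgue) \<le> II u K"
    unfolding II_def
  proof (intro nn_integral_mono ennreal_leI)
    fix x
    have "(exp (2*lam*(u x)\<^sup>2) - 1) powr (2*q) \<le> exp ((2*q) * (2*lam*(u x)\<^sup>2)) - 1"
      using lam q by (intro expm1_powr) auto
    also have "(2*q) * (2*lam*(u x)\<^sup>2) \<le> (u x)\<^sup>2 / K\<^sup>2"
    proof -
      have "(4 * lam * q * K\<^sup>2) * (u x)\<^sup>2 \<le> 1 * (u x)\<^sup>2" using hK by (intro mult_right_mono) auto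
      hence "(4 * lam * q * (u x)\<^sup>2) * K\<^sup>2 \<le> (u x)\<^sup>2" by (simp add: algebra_simps)
      thus ?thesis using K by (simp add: pos_le_divide_eq algebra_simps)
    qed
    hence "exp ((2*q) * (2*lam*(u x)\<^sup>2)) - 1 \<le> exp ((u x)\<^sup>2 / K\<^sup>2) - 1" by simp
    finally show "(exp (2*lam*(u x)\<^sup>2) - 1) powr (2*q) \<le> exp ((u x)\<^sup>2 / K\<^sup>2) - 1" .
  qed
  also note I
  finally show ?thesis .
qed


lemma ennreal_sum4:
  fixes k1 k2 k3 k4 g1 g2 g3 g4 :: real
  assumes "0 \<le> k1" "0 \<le> k2" "0 \<le> k3" "0 \<le> k4" "0 \<le> g1" "0 \<le> g2" "0 \<le> g3" "0 \<le> g4"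
  shows "ennreal (k1*g1 + k2*g2 + k3*g3 + k4*g4) =
         ennreal k1 * ennreal g1 + ennreal k2 * ennreal g2 + ennreal k3 * ennreal g3 + ennreal k4 * ennreal g4"
  using assms by (simp add: ennreal_plus ennreal_mult)

lemma main_int:
  fixes F D E1 E2 :: "'a::euclidean_space \<Rightarrow> real"
  assumes mF: "F \<in> borel_measurable lebesgue" and mD: "D \<in> borel_measurable lebesgue"
    and mE1: "E1 \<in> borel_measurable lebesgue" and mE2: "E2 \<in> borel_measurable lebesgue"
    and A: "0 \<le> A" and q: "2 \<le> q" and a: "0 < a" and c1: "0 \<le> c1" and c2: "0 \<le> c2"
    and E1: "\<And>x. 0 \<le> E1 x" and E2: "\<And>x. 0 \<le> E2 x"
    and AEb: "AE x in lebesgue. \<bar>F x\<bar> \<le> A * \<bar>D x\<bar> * (2 + E1 x + E2 x)"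
    and i1: "(\<integral>\<^sup>+ x. ennreal (\<bar>D x\<bar> powr q) \<partial>lebesgue) \<le> ennreal (c1 * a powr q)"
    and i2: "(\<integral>\<^sup>+ x. ennreal (\<bar>D x\<bar> powr (2*q)) \<partial>lebesgue) \<le> ennreal (c2 * a powr (2*q))"
    and i3: "(\<integral>\<^sup>+ x. ennreal (E1 x powr (2*q)) \<partial>lebesgue) \<le> 1"
    and i4: "(\<integral>\<^sup>+ x. ennreal (E2 x powr (2*q)) \<partial>lebesgue) \<le> 1"
  shows "(\<integral>\<^sup>+ x. ennreal (\<bar>F x\<bar> powr q) \<partial>lebesgue)
           \<le> ennreal ((3*A) powr q * (2 powr q * c1 + c2 + 1) * a powr q)"
proof -
  define t where "t = a powr q"
  define P where "P = (3*A) powr q"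
  have t: "0 < t" using a by (simp add: t_def)
  have P: "0 \<le> P" by (simp add: P_def)
  have k: "0 \<le> P * 2 powr q" "0 \<le> P / t" "0 \<le> P * t / 2" using P t by auto
  have "(\<integral>\<^sup>+ x. ennreal (\<bar>F x\<bar> powr q) \<partial>lebesgue) \<le>
     (\<integral>\<^sup>+ x. ennreal (P * 2 powr q) * ennreal (\<bar>D x\<bar> powr q) + ennreal (P / t) * ennreal (\<bar>D x\<bar> powr (2*q))
       + ennreal (P * t / 2) * ennreal (E1 x powr (2*q)) + ennreal (P * t / 2) * ennreal (E2 x powr (2*q)) \<partial>lebesgue)"
  proof (rule nn_integral_mono_AE)
    show "AE x in lebesgue. ennreal (\<bar>F x\<bar> powr q) \<le> ennreal (P * 2 powr q) * ennreal (\<bar>D x\<bar> powr q) + ennreal (P / t) * ennreal (\<bar>D x\<bar> powr (2*q))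
       + ennreal (P * t / 2) * ennreal (E1 x powr (2*q)) + ennreal (P * t / 2) * ennreal (E2 x powr (2*q))"
      using AEb
    proof (rule eventually_mono)
      fix x assume h: "\<bar>F x\<bar> \<le> A * \<bar>D x\<bar> * (2 + E1 x + E2 x)"
      have "\<bar>F x\<bar> powr q \<le> (3*A) powr q * 2 powr q * \<bar>D x\<bar> powr q + (3*A) powr q / t * \<bar>D x\<bar> powr (2*q)
           + (3*A) powr q * t / 2 * (E1 x powr (2*q) + E2 x powr (2*q))"
        using A q t E1[of x] E2[of x] h by (intro pointwise) auto
      also have "\<dots> = (P * 2 powr q) * \<bar>D x\<bar> powr q + (P / t) * \<bar>D x\<bar> powr (2*q)
           + (P * t / 2) * E1 x powr (2*q) + (P * t / 2) * E2 x powr (2*q)"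
        by (simp add: P_def algebra_simps)
      finally have "ennreal (\<bar>F x\<bar> powr q) \<le> ennreal ((P * 2 powr q) * \<bar>D x\<bar> powr q + (P / t) * \<bar>D x\<bar> powr (2*q)
           + (P * t / 2) * E1 x powr (2*q) + (P * t / 2) * E2 x powr (2*q))"
        by (rule ennreal_leI)
      also have "\<dots> = ennreal (P * 2 powr q) * ennreal (\<bar>D x\<bar> powr q) + ennreal (P / t) * ennreal (\<bar>D x\<bar> powr (2*q))
       + ennreal (P * t / 2) * ennreal (E1 x powr (2*q)) + ennreal (P * t / 2) * ennreal (E2 x powr (2*q))"
        using k by (intro ennreal_sum4) auto
      finally show "ennreal (\<bar>F x\<bar> powr q) \<le> ennreal (P * 2 powr q) * ennreal (\<bar>D x\<bar> powr q) + ennreal (P / t) * ennreal (\<bar>D x\<bar> powr (2*q))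
       + ennreal (P * t / 2) * ennreal (E1 x powr (2*q)) + ennreal (P * t / 2) * ennreal (E2 x powr (2*q))" .
    qed
  qed
  also have "\<dots> = ennreal (P * 2 powr q) * (\<integral>\<^sup>+ x. ennreal (\<bar>D x\<bar> powr q) \<partial>lebesgue)
      + ennreal (P / t) * (\<integral>\<^sup>+ x. ennreal (\<bar>D x\<bar> powr (2*q)) \<partial>lebesgue)
      + ennreal (P * t / 2) * (\<integral>\<^sup>+ x. ennreal (E1 x powr (2*q)) \<partial>lebesgue)
      + ennreal (P * t / 2) * (\<integral>\<^sup>+ x. ennreal (E2 x powr (2*q)) \<partial>lebesgue)"
    using mD mE1 mE2
    by (simp add: nn_integral_add nn_integral_cmult)
  also have "\<dots> \<le> ennreal (P * 2 powr q) * ennreal (c1 * a powr q) + ennreal (P / t) * ennreal (c2 * a powr (2*q))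
      + ennreal (P * t / 2) * ennreal 1 + ennreal (P * t / 2) * ennreal 1"
    using i1 i2 i3 i4 by (intro add_mono mult_left_mono) auto
  also have "\<dots> = ennreal ((P * 2 powr q) * (c1 * a powr q) + (P / t) * (c2 * a powr (2*q)) + (P * t / 2) * 1 + (P * t / 2) * 1)"
    using k c1 c2 by (intro ennreal_sum4[symmetric]) auto
  also have "(P * 2 powr q) * (c1 * a powr q) + (P / t) * (c2 * a powr (2*q)) + (P * t / 2) * 1 + (P * t / 2) * 1
       = (3*A) powr q * (2 powr q * c1 + c2 + 1) * a powr q"
  proof -
    have "a powr (2*q) = t * t" unfolding t_def by (simp add: powr_add[symmetric])
    thus ?thesis using t unfolding P_def t_def by (simp add: field_simps)
  qed
  finally show ?thesis .
qed


theorem lemma4p4: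
  fixes f :: "real \<Rightarrow> real" and C lam q :: real
  assumes f0: "f 0 = 0"
    and C_pos: "C > 0" and lam_pos: "lam > 0"
    and f_growth: "\<And>u v. \<bar>f u - f v\<bar> \<le> C * \<bar>u - v\<bar> * (exp (lam * u\<^sup>2) + exp (lam * v\<^sup>2))"
    and q: "2 \<le> q"
  shows "\<exists>Cq > 0. \<forall>(v :: 'a::euclidean_space \<Rightarrow> real) w1 w2 K.
           v \<in> Linf \<and> w1 \<in> expL2 \<and> w2 \<in> expL2 \<and> K > 0 \<and>
           expL2_norm w1 \<le> K \<and> expL2_norm w2 \<le> K \<and> 4 * lam * q * K\<^sup>2 \<le> 1
           \<longrightarrow> (\<lambda>x. f (w1 x + v x) - f (w2 x + v x)) \<in> borel_measurable lebesgue \<and>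
               Lq_norm_pow q (\<lambda>x. f (w1 x + v x) - f (w2 x + v x))
                 \<le> ennreal ((Cq * exp (2 * lam * (Linf_norm v)\<^sup>2) * expL2_norm (\<lambda>x. w1 x - w2 x)) powr q)"
proof -
  define R where "R = 2 powr q * cst (q/2) + cst q + 1"
  have R: "0 < R" unfolding R_def cst_def by (simp add: add_pos_nonneg)
  define Cq where "Cq = 3 * C * R powr (1/q)"
  have Cq: "0 < Cq" using C_pos R by (simp add: Cq_def)
  have fb[measurable]: "f \<in> borel_measurable borel"
    by (rule borel_measurable_continuous_onI[OF f_cont[OF f_growth]])
  show ?thesis
  proof (intro exI[of _ Cq] conjI allI impI Cq)
    fix v w1 w2 :: "'a \<Rightarrow> real" and K :: real
    assume H: "v \<in> Linf \<and> w1 \<in> expL2 \<and> w2 \<in> expL2 \<and> K > 0 \<and>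
           expL2_norm w1 \<le> K \<and> expL2_norm w2 \<le> K \<and> 4 * lam * q * K\<^sup>2 \<le> 1"
    hence vL: "v \<in> Linf" and e1: "w1 \<in> expL2" and e2: "w2 \<in> expL2" and K: "0 < K"
      and nK1: "expL2_norm w1 \<le> K" and nK2: "expL2_norm w2 \<le> K" and hK: "4 * lam * q * K\<^sup>2 \<le> 1"
      by auto
    have mv[measurable]: "v \<in> borel_measurable lebesgue" using vL unfolding Linf_def by auto
    note m1[measurable] = nonempty_of_expL2(1)[OF e1]
    note m2[measurable] = nonempty_of_expL2(1)[OF e2]
    note ne1 = nonempty_of_expL2(2)[OF e1]
    note ne2 = nonempty_of_expL2(2)[OF e2]
    show mF: "(\<lambda>x. f (w1 x + v x) - f (w2 x + v x)) \<in> borel_measurable lebesgue" by measurable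
    have IK1: "II w1 K \<le> 1"
      using fatou_K[OF m1 K] norm_prop(2)[OF ne1] nK1 by force
    have IK2: "II w2 K \<le> 1"
      using fatou_K[OF m2 K] norm_prop(2)[OF ne2] nK2 by force
    have EB1: "(\<integral>\<^sup>+ x. ennreal ((exp (2*lam*(w1 x)\<^sup>2) - 1) powr (2*q)) \<partial>lebesgue) \<le> 1"
      using q by (intro E_bound[OF m1 K IK1 lam_pos _ hK]) auto
    have EB2: "(\<integral>\<^sup>+ x. ennreal ((exp (2*lam*(w2 x)\<^sup>2) - 1) powr (2*q)) \<partial>lebesgue) \<le> 1"
      using q by (intro E_bound[OF m2 K IK2 lam_pos _ hK]) auto
    define D where "D = (\<lambda>x. w1 x - w2 x)"
    have mD[measurable]: "D \<in> borel_measurable lebesgue" unfolding D_def by measurable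
    have neD: "\<exists>a>0. II D a \<le> 1" unfolding D_def by (rule nonempty_diff[OF m1 m2 ne1 ne2])
    define nD where "nD = expL2_norm D"
    have nD: "0 \<le> nD" unfolding nD_def by (rule norm_prop(1)[OF neD])
    define M where "M = Linf_norm v"
    define A where "A = C * exp (2*lam*M\<^sup>2)"
    have A: "0 \<le> A" using C_pos by (simp add: A_def)
    have AEb: "AE x in lebesgue. \<bar>f (w1 x + v x) - f (w2 x + v x)\<bar> \<le> A * \<bar>D x\<bar> *
        (2 + (exp (2*lam*(w1 x)\<^sup>2) - 1) + (exp (2*lam*(w2 x)\<^sup>2) - 1))"
      using Linf_AE[OF vL]
    proof (rule eventually_mono)
      fix x assume "\<bar>v x\<bar> \<le> Linf_norm v"
      from pt_bound[OF f_growth C_pos lam_pos this, of "w1 x" "w2 x"]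
      show "\<bar>f (w1 x + v x) - f (w2 x + v x)\<bar> \<le> A * \<bar>D x\<bar> *
        (2 + (exp (2*lam*(w1 x)\<^sup>2) - 1) + (exp (2*lam*(w2 x)\<^sup>2) - 1))"
        by (simp add: A_def D_def M_def)
    qed
    have bound: "Lq_norm_pow q (\<lambda>x. f (w1 x + v x) - f (w2 x + v x)) \<le> ennreal ((3*A) powr q * R * a powr q)"
      if a: "nD < a" for a
    proof -
      have a0: "0 < a" using a nD by linarith
      have IDa: "II D a \<le> 1" using norm_prop(2)[OF neD] a unfolding nD_def by blast
      have i1: "(\<integral>\<^sup>+ x. ennreal (\<bar>D x\<bar> powr q) \<partial>lebesgue) \<le> ennreal (cst (q/2) * a powr q)"
        by (rule embed[OF mD a0 IDa q])
      have i2: "(\<integral>\<^sup>+ x. ennreal (\<bar>D x\<bar> powr (2*q)) \<partial>lebesgue) \<le> ennreal (cst q * a powr (2*q))"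
        using embed[OF mD a0 IDa, of "2*q"] q by simp
      have "Lq_norm_pow q (\<lambda>x. f (w1 x + v x) - f (w2 x + v x))
            \<le> ennreal ((3*A) powr q * (2 powr q * cst (q/2) + cst q + 1) * a powr q)"
        unfolding Lq_norm_pow_def
        by (rule main_int[OF mF mD _ _ A q a0 _ _ _ _ AEb i1 i2 EB1 EB2])
           (auto simp: cst_def intro!: mult_nonneg_nonneg less_imp_le[OF lam_pos])
      thus ?thesis by (simp add: R_def)
    qed
    have "Lq_norm_pow q (\<lambda>x. f (w1 x + v x) - f (w2 x + v x)) \<le> ennreal ((3*A) powr q * R * nD powr q)"
      using q R A by (intro limit_right[OF nD] bound) auto
    also have "(3*A) powr q * R * nD powr q = (Cq * exp (2 * lam * (Linf_norm v)\<^sup>2) * expL2_norm (\<lambda>x. w1 x - w2 x)) powr q"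
    proof -
      have "Cq * exp (2 * lam * (Linf_norm v)\<^sup>2) * expL2_norm (\<lambda>x. w1 x - w2 x) = (3 * A) * R powr (1/q) * nD"
        by (simp add: Cq_def A_def M_def nD_def D_def algebra_simps)
      also have "\<dots> powr q = (3 * A) powr q * (R powr (1/q)) powr q * nD powr q"
        using A R nD by (simp add: powr_mult)
      also have "(R powr (1/q)) powr q = R" using R q by (simp add: powr_powr)
      finally show ?thesis by simp
    qed
    finally show "Lq_norm_pow q (\<lambda>x. f (w1 x + v x) - f (w2 x + v x))
                 \<le> ennreal ((Cq * exp (2 * lam * (Linf_norm v)\<^sup>2) * expL2_norm (\<lambda>x. w1 x - w2 x)) powr q)" .
  qed
qed

end
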